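(* For $0<A<1$ and $m>0$ let $K_m(A)=-e^{i\pi A}+e^{-i\pi A}e^{4\pi m i/3}-e^{i\pi A}e^{4\pi m i/3}$. Let $A_0,B_0\in(0,1)$ with $A_0+B_0=1$. Then there exist $\delta>0$ and differentiable real functions $\Theta_1(A,B),\Theta_2(A,B)$ defined on $\{|A-A_0|+|B-B_0|<\delta\}$ with $\Theta_1(A_0,B_0)=1$, $\Theta_2(A_0,B_0)=2$ and $$K_{\Theta_2(A,B)}(A)+K_{\Theta_1(A,B)}(B)=0$$ (so that $(A,B,\Theta_1(A,B),\Theta_2(A,B))$ belongs to the set $\mathcal K$ below). Moreover $$\lim_{\varepsilon\to0}\frac{\Theta_1(A_0,B_0-\varepsilon)-1}{\varepsilon}=\lim_{\varepsilon\to0}\frac{\Theta_2(A_0,B_0-\varepsilon)-2}{\varepsilon}=-\frac38\Big(1+\sqrt3\cot(\pi A_0)\Big).$$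
   Context: $\mathcal K=\{(A,B,n,m):0<A,B<1,\ n>0,\ m>0,\ \tfrac{2(n+m)}{3}>1,\ K_m(A)+K_n(B)=0\}$. *)

theory Defs
  imports "HOL-Analysis.Analysis"
begin

definition Kfun :: "real \<Rightarrow> real \<Rightarrow> complex" where
  "Kfun m A = - exp (\<i> * of_real (pi * A))
              + exp (- \<i> * of_real (pi * A)) * exp (of_real (4 * pi * m / 3) * \<i>)
              - exp (\<i> * of_real (pi * A)) * exp (of_real (4 * pi * m / 3) * \<i>)"

definition Kset :: "(real \<times> real \<times> real \<times> real) set" where
  "Kset = {(A, B, n, m). 0 < A \<and> A < 1 \<and> 0 < B \<and> B < 1 \<and> n > 0 \<and> m > 0
            \<and> 2 * (n + m) / 3 > 1 \<and> Kfun m A + Kfun n B = 0}"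

end

theory Submission
  imports Defs
begin

lemma exp_cis1: "exp (\<i> * complex_of_real x) = cis x" by (simp add: cis_conv_exp)
lemma exp_cis2: "exp (- \<i> * complex_of_real x) = cis (-x)" by (simp add: cis_conv_exp)
lemma exp_cis3: "exp (complex_of_real x * \<i>) = cis x" by (simp add: cis_conv_exp mult.commute)

lemma Kfun_cis: "Kfun m A = - cis (pi*A) + cis (-(pi*A)) * cis (4*pi*m/3) - cis (pi*A) * cis (4*pi*m/3)"
  unfolding Kfun_def exp_cis1 exp_cis2 exp_cis3 ..

lemma cis_sum: "cis (pi*A) + cis (pi*B) = 2 * complex_of_real (cos (pi*(A-B)/2)) * cis (pi*(A+B)/2)"
proof -
  have "cis (pi*A) = cis (pi*(A+B)/2) * cis (pi*(A-B)/2)" by (simp add: cis_mult algebra_simps add_divide_distrib[symmetric])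
  moreover have "cis (pi*B) = cis (pi*(A+B)/2) * cis (-(pi*(A-B)/2))" by (simp add: cis_mult algebra_simps diff_divide_distrib[symmetric])
  moreover have "cis (pi*(A-B)/2) + cis (-(pi*(A-B)/2)) = 2 * complex_of_real (cos (pi*(A-B)/2))"
    by (simp add: complex_eq_iff)
  ultimately show ?thesis by (simp add: algebra_simps) (metis distrib_left mult.commute mult_2)
qed

lemma cis_diff: "cis (-x) - cis x = - 2 * \<i> * complex_of_real (sin x)"
  by (simp add: complex_eq_iff)

lemma sqrt_ident:
  fixes rr ss tt :: real
  assumes "ss > 0" "tt > 0" "rr > 0"
  shows "ss * sqrt (1 - ((rr^2+ss^2-tt^2)/(2 * ss * rr))^2) = tt * sqrt (1 - ((rr^2+tt^2-ss^2)/(2 * tt * rr))^2)"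
proof -
  have "ss^2 * (1 - ((rr^2+ss^2-tt^2)/(2 * ss * rr))^2) = tt^2 * (1 - ((rr^2+tt^2-ss^2)/(2 * tt * rr))^2)"
    using assms by (simp add: field_simps power2_eq_square)
  hence "sqrt (ss^2 * (1 - ((rr^2+ss^2-tt^2)/(2 * ss * rr))^2)) = sqrt (tt^2 * (1 - ((rr^2+tt^2-ss^2)/(2 * tt * rr))^2))" by simp
  thus ?thesis using assms by (simp add: real_sqrt_mult)
qed

definition XX :: "real \<Rightarrow> real \<Rightarrow> real" where
  "XX A B = (cos (pi*(A-B)/2)^2 + sin (pi*A)^2 - sin (pi*B)^2) / (2 * sin (pi*A) * cos (pi*(A-B)/2))"
definition T2 :: "real \<times> real \<Rightarrow> real" where
  "T2 z = 3/(4*pi) * (5*pi/2 + pi*(fst z + snd z)/2 - arccos (XX (fst z) (snd z)))"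
definition T1 :: "real \<times> real \<Rightarrow> real" where
  "T1 z = 3/(4*pi) * (pi/2 + pi*(fst z + snd z)/2 + arccos (XX (snd z) (fst z)))"

lemma cos_half_pos: "0 < A \<Longrightarrow> A < 1 \<Longrightarrow> 0 < B \<Longrightarrow> B < 1 \<Longrightarrow> cos (pi*(A-B)/2) > 0"
proof -
  assume h: "0 < A" "A < 1" "0 < B" "B < 1"
  have "pi*(A-B) < pi*1" using h by (intro mult_strict_left_mono) auto
  moreover have "pi*(B-A) < pi*1" using h by (intro mult_strict_left_mono) auto
  ultimately show ?thesis by (intro cos_gt_zero_pi) (auto simp: field_simps)
qed

lemma key_eq:
  assumes A: "0 < A" "A < 1" and B: "0 < B" "B < 1"
    and X: "-1 \<le> XX A B" "XX A B \<le> 1" and Y: "-1 \<le> XX B A" "XX B A \<le> 1"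
  shows "Kfun (T2 (A,B)) A + Kfun (T1 (A,B)) B = 0"
proof -
  define r where "r = cos (pi*(A-B)/2)"
  define s where "s = sin (pi*A)"
  define t where "t = sin (pi*B)"
  define \<sigma> where "\<sigma> = pi*(A+B)/2"
  define \<alpha> where "\<alpha> = arccos (XX A B)"
  define \<beta> where "\<beta> = arccos (XX B A)"
  have r0: "r > 0" unfolding r_def using cos_half_pos A B by blast
  have s0: "s > 0" unfolding s_def using A by (intro sin_gt_zero) auto
  have t0: "t > 0" unfolding t_def using B by (intro sin_gt_zero) auto
  have rBA: "cos (pi*(B-A)/2) = r" unfolding r_def by (metis cos_minus minus_diff_eq minus_divide_left mult_minus_right)
  have XAB: "XX A B = (r^2+s^2-t^2)/(2 * s * r)" unfolding XX_def r_def s_def t_def ..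
  have XBA: "XX B A = (r^2+t^2-s^2)/(2 * t * r)" unfolding XX_def rBA s_def t_def ..
  have th2: "4*pi*T2 (A,B)/3 = 2*pi + pi/2 + \<sigma> + (-\<alpha>)"
    unfolding T2_def \<sigma>_def \<alpha>_def by (simp add: field_simps)
  have th1: "4*pi*T1 (A,B)/3 = pi/2 + \<sigma> + \<beta>"
    unfolding T1_def \<sigma>_def \<beta>_def by (simp add: field_simps)
  have c2: "cis (4*pi*T2 (A,B)/3) = \<i> * cis \<sigma> * cis (-\<alpha>)"
  proof -
    have "cis (2*pi + pi/2 + \<sigma> + -\<alpha>) = cis (2*pi) * cis (pi/2) * cis \<sigma> * cis (-\<alpha>)" by (simp only: cis_mult)
    thus ?thesis unfolding th2 by (simp add: complex_eq_iff)
  qed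
  have c1: "cis (4*pi*T1 (A,B)/3) = \<i> * cis \<sigma> * cis \<beta>"
  proof -
    have "cis (pi/2 + \<sigma> + \<beta>) = cis (pi/2) * cis \<sigma> * cis \<beta>" by (simp only: cis_mult)
    thus ?thesis unfolding th1 by (simp add: complex_eq_iff)
  qed
  have KA: "Kfun (T2 (A,B)) A = - cis (pi*A) - 2 * \<i> * s * cis (4*pi*T2 (A,B)/3)"
  proof -
    have "Kfun (T2 (A,B)) A = - cis (pi*A) + (cis (-(pi*A)) - cis (pi*A)) * cis (4*pi*T2 (A,B)/3)"
      unfolding Kfun_cis by (simp add: algebra_simps)
    also have "\<dots> = - cis (pi*A) - 2 * \<i> * s * cis (4*pi*T2 (A,B)/3)"
      unfolding cis_diff s_def by (simp add: algebra_simps)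
    finally show ?thesis .
  qed
  have KB: "Kfun (T1 (A,B)) B = - cis (pi*B) - 2 * \<i> * t * cis (4*pi*T1 (A,B)/3)"
  proof -
    have "Kfun (T1 (A,B)) B = - cis (pi*B) + (cis (-(pi*B)) - cis (pi*B)) * cis (4*pi*T1 (A,B)/3)"
      unfolding Kfun_cis by (simp add: algebra_simps)
    also have "\<dots> = - cis (pi*B) - 2 * \<i> * t * cis (4*pi*T1 (A,B)/3)"
      unfolding cis_diff t_def by (simp add: algebra_simps)
    finally show ?thesis .
  qed
  have sumr: "s * cis (-\<alpha>) + t * cis \<beta> = r"
  proof (simp add: complex_eq_iff, intro conjI)
    show "s * cos \<alpha> + t * cos \<beta> = r"
      unfolding \<alpha>_def \<beta>_def using X Y r0 s0 t0 by (simp add: XAB XBA field_simps power2_eq_square)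
    show "t * sin \<beta> = s * sin \<alpha>"
      unfolding \<alpha>_def \<beta>_def using X Y r0 s0 t0 sqrt_ident[of s t r] by (simp add: sin_arccos XAB XBA)
  qed
  have "Kfun (T2 (A,B)) A + Kfun (T1 (A,B)) B
      = - (cis (pi*A) + cis (pi*B)) - 2 * \<i> * (\<i> * cis \<sigma>) * (s * cis (-\<alpha>) + t * cis \<beta>)"
    unfolding KA KB c1 c2 by (simp add: algebra_simps)
  also have "\<dots> = 0" unfolding sumr cis_sum r_def \<sigma>_def by (simp add: algebra_simps)
  finally show ?thesis .
qed

lemma T_pos:
  assumes "0 < A" "A < 1" "0 < B" "B < 1" "-1 \<le> XX A B" "XX A B \<le> 1" "-1 \<le> XX B A" "XX B A \<le> 1"
  shows "T1 (A,B) > 0" "T2 (A,B) > 0" "2 * (T1 (A,B) + T2 (A,B)) / 3 > 1"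
proof -
  have a1: "0 \<le> arccos (XX A B)" "arccos (XX A B) \<le> pi" using assms arccos_bounded by auto
  have a2: "0 \<le> arccos (XX B A)" "arccos (XX B A) \<le> pi" using assms arccos_bounded by auto
  have p: "pi*(A+B)/2 > 0" using assms by simp
  show "T1 (A,B) > 0" unfolding T1_def using a2 p by (intro mult_pos_pos) auto
  show "T2 (A,B) > 0" unfolding T2_def using a1 p by (intro mult_pos_pos) auto
  have "2 * (T1 (A,B) + T2 (A,B)) / 3 = (3*pi + pi*(A+B) + arccos (XX B A) - arccos (XX A B)) / (2*pi)"
    unfolding T1_def T2_def by (simp add: field_simps)
  also have "\<dots> > 1" using a1 a2 p by (simp add: field_simps)
  finally show "2 * (T1 (A,B) + T2 (A,B)) / 3 > 1" .
qed

lemma T_diff: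
  assumes "0 < A" "A < 1" "0 < B" "B < 1" "-1 < XX A B" "XX A B < 1" "-1 < XX B A" "XX B A < 1"
  shows "T1 differentiable (at (A,B))" "T2 differentiable (at (A,B))"
proof -
  have r: "cos (pi*(A-B)/2) \<noteq> 0" "cos (pi*(B-A)/2) \<noteq> 0" using cos_half_pos assms by (metis less_irrefl)+
  have s: "sin (pi*A) \<noteq> 0" "sin (pi*B) \<noteq> 0" using assms by (metis less_irrefl sin_gt_zero mult_pos_pos mult_strict_left_mono pi_gt_zero mult.right_neutral)+
  show "T1 differentiable (at (A,B))" unfolding differentiable_def T1_def[abs_def]
    apply (rule exI)
    apply (rule derivative_eq_intros refl | use assms r s in \<open>simp add: XX_def\<close>)+
    done
  show "T2 differentiable (at (A,B))" unfolding differentiable_def T2_def[abs_def]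
    apply (rule exI)
    apply (rule derivative_eq_intros refl | use assms r s in \<open>simp add: XX_def\<close>)+
    done
qed

lemma base_trig:
  assumes "B0 = 1 - A0"
  shows "sin (pi*B0) = sin (pi*A0)" "cos (pi*B0) = - cos (pi*A0)"
    "cos (pi*(B0-A0)/2) = sin (pi*A0)" "sin (pi*(B0-A0)/2) = cos (pi*A0)"
    "cos (pi*(A0-B0)/2) = sin (pi*A0)" "sin (pi*(A0-B0)/2) = - cos (pi*A0)"
proof -
  have e1: "pi*B0 = pi - pi*A0" unfolding assms by (simp add: algebra_simps)
  have e2: "pi*(B0-A0)/2 = pi/2 - pi*A0" unfolding assms by (simp add: field_simps)
  have e3: "pi*(A0-B0)/2 = pi*A0 - pi/2" unfolding assms by (simp add: field_simps)
  show "sin (pi*B0) = sin (pi*A0)" "cos (pi*B0) = - cos (pi*A0)" unfolding e1 by simp_all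
  show "cos (pi*(B0-A0)/2) = sin (pi*A0)" "sin (pi*(B0-A0)/2) = cos (pi*A0)" unfolding e2
    by (simp_all add: cos_diff sin_diff)
  show "cos (pi*(A0-B0)/2) = sin (pi*A0)" "sin (pi*(A0-B0)/2) = - cos (pi*A0)" unfolding e3
    by (simp_all add: cos_diff sin_diff)
qed

lemma dY:
  assumes "0 < A0" "A0 < 1" "B0 = 1 - A0"
  shows "((\<lambda>B. XX B A0) has_real_derivative (-3*pi*cos (pi*A0)/(4 * sin (pi*A0)))) (at B0)"
proof -
  have S: "sin (pi*A0) > 0" using assms by (intro sin_gt_zero) auto
  note bt = base_trig[OF assms(3)]
  define S' where "S' = sin (pi*A0)"
  define C where "C = cos (pi*A0)"
  have dN0: "((\<lambda>B. cos (pi*(B-A0)/2)^2 + sin (pi*B)^2 - sin (pi*A0)^2) has_real_derivative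
      (2 * cos (pi*(B0-A0)/2) * (- sin (pi*(B0-A0)/2) * (pi/2)) + 2 * sin (pi*B0) * (cos (pi*B0) * pi))) (at B0)"
    by (auto intro!: derivative_eq_intros)
  have eN: "2 * cos (pi*(B0-A0)/2) * (- sin (pi*(B0-A0)/2) * (pi/2)) + 2 * sin (pi*B0) * (cos (pi*B0) * pi) = -3*pi*S'*C"
    unfolding bt S'_def C_def by (simp add: algebra_simps)
  have dN: "((\<lambda>B. cos (pi*(B-A0)/2)^2 + sin (pi*B)^2 - sin (pi*A0)^2) has_real_derivative (-3*pi*S'*C)) (at B0)"
    using dN0 eN by simp
  have dD0: "((\<lambda>B. 2 * sin (pi*B) * cos (pi*(B-A0)/2)) has_real_derivative
      (2 * (cos (pi*B0) * pi) * cos (pi*(B0-A0)/2) + 2 * sin (pi*B0) * (- sin (pi*(B0-A0)/2) * (pi/2)))) (at B0)"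
    by (auto intro!: derivative_eq_intros)
  have eD: "2 * (cos (pi*B0) * pi) * cos (pi*(B0-A0)/2) + 2 * sin (pi*B0) * (- sin (pi*(B0-A0)/2) * (pi/2)) = -3*pi*S'*C"
    unfolding bt S'_def C_def by (simp add: algebra_simps)
  have dD: "((\<lambda>B. 2 * sin (pi*B) * cos (pi*(B-A0)/2)) has_real_derivative (-3*pi*S'*C)) (at B0)"
    using dD0 eD by simp
  have "((\<lambda>B. (cos (pi*(B-A0)/2)^2 + sin (pi*B)^2 - sin (pi*A0)^2) / (2 * sin (pi*B) * cos (pi*(B-A0)/2))) has_real_derivative
      ((-3*pi*S'*C) * (2*S'*S') - (S'*S') * (-3*pi*S'*C)) / (2*S'*S')^2) (at B0)"
    using DERIV_divide[OF dN dD] S by (simp add: bt S'_def power2_eq_square)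
  moreover have "((-3*pi*S'*C) * (2*S'*S') - (S'*S') * (-3*pi*S'*C)) / (2*S'*S')^2 = -3*pi*C/(4 * S')"
    using S unfolding S'_def[symmetric] by (simp add: field_simps power2_eq_square)
  ultimately show ?thesis unfolding XX_def S'_def C_def by simp
qed

lemma dX:
  assumes "0 < A0" "A0 < 1" "B0 = 1 - A0"
  shows "((\<lambda>B. XX A0 B) has_real_derivative (3*pi*cos (pi*A0)/(4 * sin (pi*A0)))) (at B0)"
proof -
  have S: "sin (pi*A0) > 0" using assms by (intro sin_gt_zero) auto
  note bt = base_trig[OF assms(3)]
  define S' where "S' = sin (pi*A0)"
  define C where "C = cos (pi*A0)"
  have dN0: "((\<lambda>B. cos (pi*(A0-B)/2)^2 + sin (pi*A0)^2 - sin (pi*B)^2) has_real_derivative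
      (2 * cos (pi*(A0-B0)/2) * (- sin (pi*(A0-B0)/2) * (-pi/2)) - 2 * sin (pi*B0) * (cos (pi*B0) * pi))) (at B0)"
    by (auto intro!: derivative_eq_intros)
  have eN: "2 * cos (pi*(A0-B0)/2) * (- sin (pi*(A0-B0)/2) * (-pi/2)) - 2 * sin (pi*B0) * (cos (pi*B0) * pi) = pi*S'*C"
    unfolding bt S'_def C_def by (simp add: algebra_simps)
  have dN: "((\<lambda>B. cos (pi*(A0-B)/2)^2 + sin (pi*A0)^2 - sin (pi*B)^2) has_real_derivative (pi*S'*C)) (at B0)"
    using dN0 eN by simp
  have dD0: "((\<lambda>B. 2 * sin (pi*A0) * cos (pi*(A0-B)/2)) has_real_derivative
      (2 * sin (pi*A0) * (- sin (pi*(A0-B0)/2) * (-pi/2)))) (at B0)"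
    by (auto intro!: derivative_eq_intros)
  have eD: "2 * sin (pi*A0) * (- sin (pi*(A0-B0)/2) * (-pi/2)) = -pi*S'*C"
    unfolding bt S'_def C_def by (simp add: algebra_simps)
  have dD: "((\<lambda>B. 2 * sin (pi*A0) * cos (pi*(A0-B)/2)) has_real_derivative (-pi*S'*C)) (at B0)"
    using dD0 eD by simp
  have "((\<lambda>B. (cos (pi*(A0-B)/2)^2 + sin (pi*A0)^2 - sin (pi*B)^2) / (2 * sin (pi*A0) * cos (pi*(A0-B)/2))) has_real_derivative
      ((pi*S'*C) * (2*S'*S') - (S'*S') * (-pi*S'*C)) / (2*S'*S')^2) (at B0)"
    using DERIV_divide[OF dN dD] S by (simp add: bt S'_def power2_eq_square)
  moreover have "((pi*S'*C) * (2*S'*S') - (S'*S') * (-pi*S'*C)) / (2*S'*S')^2 = 3*pi*C/(4 * S')"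
    using S unfolding S'_def[symmetric] by (simp add: field_simps power2_eq_square)
  ultimately show ?thesis unfolding XX_def S'_def C_def by simp
qed

lemma base_vals:
  assumes "0 < A0" "A0 < 1" "B0 = 1 - A0"
  shows "XX A0 B0 = 1/2" "XX B0 A0 = 1/2"
proof -
  have S: "sin (pi*A0) > 0" using assms by (intro sin_gt_zero) auto
  note bt = base_trig[OF assms(3)]
  show "XX A0 B0 = 1/2" "XX B0 A0 = 1/2" unfolding XX_def bt using S by (simp_all add: power2_eq_square)
qed

lemma arccos_deriv_half: "DERIV arccos (1/2) :> - 2 / sqrt 3"
proof -
  have h: "sqrt (1 - (1/2)^2) = sqrt 3 / 2"
    by (simp add: power2_eq_square real_sqrt_divide)
  have "DERIV arccos (1/2) :> inverse (- sqrt (1 - (1/2)^2))" by (rule DERIV_arccos) auto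
  moreover have "inverse (- sqrt (1 - (1/2)^2)) = - 2 / sqrt 3" unfolding h by (simp add: field_simps)
  ultimately show ?thesis by simp
qed

lemma sqrt3_inv: "2 / sqrt 3 = 2 * sqrt 3 / 3"
  by (simp add: field_simps)

lemma dT:
  assumes "0 < A0" "A0 < 1" "B0 = 1 - A0"
  shows "((\<lambda>B. T1 (A0,B)) has_real_derivative 3/8*(1 + sqrt 3 * cot (pi*A0))) (at B0)"
    "((\<lambda>B. T2 (A0,B)) has_real_derivative 3/8*(1 + sqrt 3 * cot (pi*A0))) (at B0)"
proof -
  have S: "sin (pi*A0) > 0" using assms by (intro sin_gt_zero) auto
  note bv = base_vals[OF assms]
  have aY: "DERIV (\<lambda>B. arccos (XX B A0)) B0 :> (- 2 / sqrt 3) * (-3*pi*cos (pi*A0)/(4 * sin (pi*A0)))"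
    using DERIV_chain2[OF arccos_deriv_half[folded bv(2)] dY[OF assms]] .
  have aX: "DERIV (\<lambda>B. arccos (XX A0 B)) B0 :> (- 2 / sqrt 3) * (3*pi*cos (pi*A0)/(4 * sin (pi*A0)))"
    using DERIV_chain2[OF arccos_deriv_half[folded bv(1)] dX[OF assms]] .
  have l: "DERIV (\<lambda>B. pi/2 + pi*(A0+B)/2) B0 :> pi/2" by (auto intro!: derivative_eq_intros)
  have l2: "DERIV (\<lambda>B. 5*pi/2 + pi*(A0+B)/2) B0 :> pi/2" by (auto intro!: derivative_eq_intros)
  have s3: "sqrt 3 * sqrt 3 = 3" by simp
  have d1': "DERIV (\<lambda>B. 3/(4*pi) * (pi/2 + pi*(A0+B)/2 + arccos (XX B A0))) B0 :>
     3/(4*pi) * (pi/2 + (- 2 / sqrt 3) * (-3*pi*cos (pi*A0)/(4 * sin (pi*A0))))"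
    by (intro DERIV_cmult DERIV_add l aY)
  have e1: "3/(4*pi) * (pi/2 + (- 2 / sqrt 3) * (-3*pi*cos (pi*A0)/(4 * sin (pi*A0)))) = 3/8*(1 + sqrt 3 * cot (pi*A0))"
    using S s3 by (simp add: cot_def field_simps)
  have f1: "(\<lambda>B. T1 (A0,B)) = (\<lambda>B. 3/(4*pi) * (pi/2 + pi*(A0+B)/2 + arccos (XX B A0)))"
    by (simp add: T1_def)
  have d1: "DERIV (\<lambda>B. T1 (A0,B)) B0 :> 3/8*(1 + sqrt 3 * cot (pi*A0))"
    unfolding f1 using d1' unfolding e1 .
  then show "((\<lambda>B. T1 (A0,B)) has_real_derivative 3/8*(1 + sqrt 3 * cot (pi*A0))) (at B0)" .
  have d2': "DERIV (\<lambda>B. 3/(4*pi) * (5*pi/2 + pi*(A0+B)/2 - arccos (XX A0 B))) B0 :>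
     3/(4*pi) * (pi/2 - (- 2 / sqrt 3) * (3*pi*cos (pi*A0)/(4 * sin (pi*A0))))"
    by (intro DERIV_cmult DERIV_diff l2 aX)
  have e2: "3/(4*pi) * (pi/2 - (- 2 / sqrt 3) * (3*pi*cos (pi*A0)/(4 * sin (pi*A0)))) = 3/8*(1 + sqrt 3 * cot (pi*A0))"
    using S s3 by (simp add: cot_def field_simps)
  have f2: "(\<lambda>B. T2 (A0,B)) = (\<lambda>B. 3/(4*pi) * (5*pi/2 + pi*(A0+B)/2 - arccos (XX A0 B)))"
    by (simp add: T2_def)
  have d2: "DERIV (\<lambda>B. T2 (A0,B)) B0 :> 3/8*(1 + sqrt 3 * cot (pi*A0))"
    unfolding f2 using d2' unfolding e2 .
  then show "((\<lambda>B. T2 (A0,B)) has_real_derivative 3/8*(1 + sqrt 3 * cot (pi*A0))) (at B0)" .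
qed

lemma diffq:
  assumes "(f has_real_derivative D) (at x)"
  shows "((\<lambda>e. (f (x - e) - f x) / e) \<longlongrightarrow> - D) (at 0)"
proof -
  have g: "((\<lambda>e. x - e) has_real_derivative -1) (at 0)" by (auto intro!: derivative_eq_intros)
  have f: "(f has_real_derivative D) (at (x - 0))" using assms by simp
  have "((\<lambda>e. f (x - e)) has_real_derivative D * (-1)) (at 0)"
    using DERIV_chain2[OF f g] .
  hence "((\<lambda>h. (f (x - (0 + h)) - f (x - 0)) / h) \<longlongrightarrow> D * (-1)) (at 0)"
    unfolding DERIV_def .
  thus ?thesis by simp
qed

theorem mainTheorem5:
  fixes A0 B0 :: real
  assumes "0 < A0" "A0 < 1" "0 < B0" "B0 < 1" "A0 + B0 = 1"
  shows "\<exists>\<delta>>0. \<exists>\<Theta>1 \<Theta>2 :: real \<times> real \<Rightarrow> real.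
     (\<forall>A B. \<bar>A - A0\<bar> + \<bar>B - B0\<bar> < \<delta> \<longrightarrow>
        \<Theta>1 differentiable (at (A, B)) \<and> \<Theta>2 differentiable (at (A, B)) \<and>
        Kfun (\<Theta>2 (A, B)) A + Kfun (\<Theta>1 (A, B)) B = 0 \<and>
        (A, B, \<Theta>1 (A, B), \<Theta>2 (A, B)) \<in> Kset) \<and>
     \<Theta>1 (A0, B0) = 1 \<and> \<Theta>2 (A0, B0) = 2 \<and>
     ((\<lambda>\<epsilon>. (\<Theta>1 (A0, B0 - \<epsilon>) - 1) / \<epsilon>) \<longlongrightarrow> - 3 / 8 * (1 + sqrt 3 * cot (pi * A0))) (at 0) \<and>
     ((\<lambda>\<epsilon>. (\<Theta>2 (A0, B0 - \<epsilon>) - 2) / \<epsilon>) \<longlongrightarrow> - 3 / 8 * (1 + sqrt 3 * cot (pi * A0))) (at 0)"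
proof -
  have hB: "B0 = 1 - A0" using assms by simp
  note bv = base_vals[OF assms(1,2) hB]
  note bt = base_trig[OF hB]
  have S: "sin (pi*A0) > 0" using assms by (intro sin_gt_zero) auto
  define P where "P z = (0 < fst z \<and> fst z < 1 \<and> 0 < snd z \<and> snd z < 1 \<and>
      -1 < XX (fst z) (snd z) \<and> XX (fst z) (snd z) < 1 \<and> -1 < XX (snd z) (fst z) \<and> XX (snd z) (fst z) < 1)" for z
  have cX: "isCont (\<lambda>z. XX (fst z) (snd z)) (A0,B0)" unfolding XX_def
    by (intro continuous_intros) (use S bt in simp_all)
  have cY: "isCont (\<lambda>z. XX (snd z) (fst z)) (A0,B0)" unfolding XX_def
    by (intro continuous_intros) (use S bt in simp_all)
  have tX: "((\<lambda>z. XX (fst z) (snd z)) \<longlongrightarrow> 1/2) (at (A0,B0))"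
    using cX bv unfolding isCont_def by simp
  have tY: "((\<lambda>z. XX (snd z) (fst z)) \<longlongrightarrow> 1/2) (at (A0,B0))"
    using cY bv unfolding isCont_def by simp
  have tf: "(fst \<longlongrightarrow> A0) (at (A0,B0))" using tendsto_fst[OF tendsto_ident_at, of "(A0,B0)" UNIV] by simp
  have ts: "(snd \<longlongrightarrow> B0) (at (A0,B0))" using tendsto_snd[OF tendsto_ident_at, of "(A0,B0)" UNIV] by simp
  have e1: "eventually (\<lambda>z. -1 < XX (fst z) (snd z)) (at (A0,B0))" by (rule order_tendstoD(1)[OF tX]) simp
  have e2: "eventually (\<lambda>z. XX (fst z) (snd z) < 1) (at (A0,B0))" by (rule order_tendstoD(2)[OF tX]) simp
  have e3: "eventually (\<lambda>z. -1 < XX (snd z) (fst z)) (at (A0,B0))" by (rule order_tendstoD(1)[OF tY]) simp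
  have e4: "eventually (\<lambda>z. XX (snd z) (fst z) < 1) (at (A0,B0))" by (rule order_tendstoD(2)[OF tY]) simp
  have e5: "eventually (\<lambda>z. 0 < fst z) (at (A0,B0))" by (rule order_tendstoD(1)[OF tf]) (use assms in simp)
  have e6: "eventually (\<lambda>z. fst z < 1) (at (A0,B0))" by (rule order_tendstoD(2)[OF tf]) (use assms in simp)
  have e7: "eventually (\<lambda>z. 0 < snd z) (at (A0,B0))" by (rule order_tendstoD(1)[OF ts]) (use assms in simp)
  have e8: "eventually (\<lambda>z. snd z < 1) (at (A0,B0))" by (rule order_tendstoD(2)[OF ts]) (use assms in simp)
  have "eventually P (at (A0,B0))"
    using e1 e2 e3 e4 e5 e6 e7 e8 by eventually_elim (simp add: P_def)
  moreover have "P (A0,B0)" unfolding P_def using assms bv by simp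
  ultimately have "eventually P (nhds (A0,B0))" by (simp add: eventually_nhds_conv_at)
  then obtain d where d0: "d > 0" and dP: "\<And>y. dist y (A0,B0) < d \<Longrightarrow> P y"
    unfolding eventually_nhds_metric by blast
  have main: "\<forall>A B. \<bar>A - A0\<bar> + \<bar>B - B0\<bar> < d \<longrightarrow>
        T1 differentiable (at (A, B)) \<and> T2 differentiable (at (A, B)) \<and>
        Kfun (T2 (A, B)) A + Kfun (T1 (A, B)) B = 0 \<and>
        (A, B, T1 (A, B), T2 (A, B)) \<in> Kset"
  proof (intro allI impI)
    fix A B assume h: "\<bar>A - A0\<bar> + \<bar>B - B0\<bar> < d"
    have "dist (A,B) (A0,B0) \<le> \<bar>A - A0\<bar> + \<bar>B - B0\<bar>"
      unfolding dist_Pair_Pair dist_real_def using sqrt_sum_squares_le_sum_abs[of "A - A0" "B - B0"] by simp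
    hence "P (A,B)" using h dP by simp
    hence c: "0 < A" "A < 1" "0 < B" "B < 1" "-1 < XX A B" "XX A B < 1" "-1 < XX B A" "XX B A < 1"
      unfolding P_def by auto
    have K: "Kfun (T2 (A, B)) A + Kfun (T1 (A, B)) B = 0" using key_eq c by simp
    have pos: "T1 (A,B) > 0" "T2 (A,B) > 0" "2 * (T1 (A,B) + T2 (A,B)) / 3 > 1" using T_pos c by simp_all
    show "T1 differentiable (at (A, B)) \<and> T2 differentiable (at (A, B)) \<and>
        Kfun (T2 (A, B)) A + Kfun (T1 (A, B)) B = 0 \<and> (A, B, T1 (A, B), T2 (A, B)) \<in> Kset"
      using T_diff[OF c] K pos c unfolding Kset_def by simp
  qed
  have v1: "T1 (A0,B0) = 1" unfolding T1_def fst_conv snd_conv bv arccos_one_half using assms(5) by (simp add: field_simps)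
  have v2: "T2 (A0,B0) = 2" unfolding T2_def fst_conv snd_conv bv arccos_one_half using assms(5) by (simp add: field_simps)
  have dT': "((\<lambda>B. T1 (A0,B)) has_real_derivative 3/8*(1 + sqrt 3 * cot (pi*A0))) (at B0)"
    "((\<lambda>B. T2 (A0,B)) has_real_derivative 3/8*(1 + sqrt 3 * cot (pi*A0))) (at B0)"
    using dT[OF assms(1,2) hB] by auto
  have e: "- (3/8*(1 + sqrt 3 * cot (pi*A0))) = - 3 / 8 * (1 + sqrt 3 * cot (pi * A0))" by simp
  have lim1: "((\<lambda>\<epsilon>. (T1 (A0, B0 - \<epsilon>) - 1) / \<epsilon>) \<longlongrightarrow> - 3 / 8 * (1 + sqrt 3 * cot (pi * A0))) (at 0)"
    using diffq[OF dT'(1)] unfolding v1 e .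
  have lim2: "((\<lambda>\<epsilon>. (T2 (A0, B0 - \<epsilon>) - 2) / \<epsilon>) \<longlongrightarrow> - 3 / 8 * (1 + sqrt 3 * cot (pi * A0))) (at 0)"
    using diffq[OF dT'(2)] unfolding v2 e .
  show ?thesis
    apply (rule exI[of _ d], rule conjI[OF d0])
    apply (rule exI[of _ T1], rule exI[of _ T2])
    using main v1 v2 lim1 lim2 by blast
qed

end
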